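(* Let $B$ be a Poisson algebra over a field $k$ of characteristic zero, $\alpha$ a Poisson derivation of $B$, and $A=B[x^{\pm1};\alpha]_p$. Assume that $\alpha$ extends to a derivation $\hat\alpha$ of $A$ with $\hat\alpha(x)=sx$ for some nonzero $s\in k$. Then every $\hat\alpha$-stable Poisson prime ideal of $A$ is induced from a Poisson prime ideal of $B$, i.e. has the form $QA=Q[x^{\pm1}]$ for a Poisson prime ideal $Q$ of $B$.
   Context: A Poisson derivation of a Poisson algebra $B$ is a $k$-linear map that is a derivation for both the multiplication and the Poisson bracket. $B[x^{\pm1};\alpha]_p$ denotes the Laurent polynomial ring $B[x^{\pm1}]$ with the unique Poisson bracket extending that of $B$ and satisfying $\{x,b\}=\alpha(b)x$ for $b\in B$. A Poisson prime ideal is a prime ideal $P$ with $\{A,P\}\subseteq P$. *)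

theory Defs
  imports Main "HOL-Library.Poly_Mapping"
begin

(* A k-algebra structure on a commutative ring 'r is a unital ring homomorphism k -> 'r. *)
definition k_alg_hom :: "('k::field \<Rightarrow> 'r::comm_ring_1) \<Rightarrow> bool" where
  "k_alg_hom \<iota> \<longleftrightarrow> \<iota> 1 = 1 \<and> (\<forall>c d. \<iota> (c + d) = \<iota> c + \<iota> d) \<and> (\<forall>c d. \<iota> (c * d) = \<iota> c * \<iota> d)"

definition k_linear :: "('k::field \<Rightarrow> 'r::comm_ring_1) \<Rightarrow> ('r \<Rightarrow> 'r) \<Rightarrow> bool" where
  "k_linear \<iota> f \<longleftrightarrow> (\<forall>a b. f (a + b) = f a + f b) \<and> (\<forall>c a. f (\<iota> c * a) = \<iota> c * f a)"

definition poisson_algebra :: "('k::field \<Rightarrow> 'r::comm_ring_1) \<Rightarrow> ('r \<Rightarrow> 'r \<Rightarrow> 'r) \<Rightarrow> bool" where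
  "poisson_algebra \<iota> br \<longleftrightarrow> k_alg_hom \<iota>
     \<and> (\<forall>a. k_linear \<iota> (\<lambda>b. br a b)) \<and> (\<forall>b. k_linear \<iota> (\<lambda>a. br a b))
     \<and> (\<forall>a. br a a = 0)
     \<and> (\<forall>a b c. br a (br b c) + br b (br c a) + br c (br a b) = 0)
     \<and> (\<forall>a b c. br a (b * c) = br a b * c + b * br a c)"

definition k_derivation :: "('k::field \<Rightarrow> 'r::comm_ring_1) \<Rightarrow> ('r \<Rightarrow> 'r) \<Rightarrow> bool" where
  "k_derivation \<iota> d \<longleftrightarrow> k_linear \<iota> d \<and> (\<forall>a b. d (a * b) = d a * b + a * d b)"

definition poisson_derivation :: "('k::field \<Rightarrow> 'r::comm_ring_1) \<Rightarrow> ('r \<Rightarrow> 'r \<Rightarrow> 'r) \<Rightarrow> ('r \<Rightarrow> 'r) \<Rightarrow> bool" where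
  "poisson_derivation \<iota> br d \<longleftrightarrow> k_derivation \<iota> d \<and> (\<forall>a b. d (br a b) = br (d a) b + br a (d b))"

definition is_ideal :: "'r::comm_ring_1 set \<Rightarrow> bool" where
  "is_ideal I \<longleftrightarrow> 0 \<in> I \<and> (\<forall>a\<in>I. \<forall>b\<in>I. a + b \<in> I) \<and> (\<forall>r. \<forall>a\<in>I. r * a \<in> I)"

definition prime_ideal :: "'r::comm_ring_1 set \<Rightarrow> bool" where
  "prime_ideal P \<longleftrightarrow> is_ideal P \<and> P \<noteq> UNIV \<and> (\<forall>a b. a * b \<in> P \<longrightarrow> a \<in> P \<or> b \<in> P)"

definition poisson_prime_ideal :: "('r::comm_ring_1 \<Rightarrow> 'r \<Rightarrow> 'r) \<Rightarrow> 'r set \<Rightarrow> bool" where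
  "poisson_prime_ideal br P \<longleftrightarrow> prime_ideal P \<and> (\<forall>a. \<forall>p\<in>P. br a p \<in> P)"

(* Laurent polynomials B[x^{\<pm>1}] are represented as finitely supported maps int \<Rightarrow>\<^sub>0 B *)
definition lconst :: "'b::comm_ring_1 \<Rightarrow> (int \<Rightarrow>\<^sub>0 'b)" where
  "lconst b = Poly_Mapping.single 0 b"

definition lvar :: "int \<Rightarrow>\<^sub>0 'b::comm_ring_1" where
  "lvar = Poly_Mapping.single 1 1"

(* Q[x^{\<pm>1}] = QA: Laurent polynomials all of whose coefficients lie in Q *)
definition laurent_ext :: "'b::comm_ring_1 set \<Rightarrow> (int \<Rightarrow>\<^sub>0 'b) set" where
  "laurent_ext Q = {f. \<forall>n. Poly_Mapping.lookup f n \<in> Q}"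

end

theory Submission
  imports Defs
begin

lemma keys_remove:
  fixes f :: "'a \<Rightarrow>\<^sub>0 'b::ab_group_add"
  shows "Poly_Mapping.keys (f - Poly_Mapping.single n (Poly_Mapping.lookup f n)) = Poly_Mapping.keys f - {n}"
  by (auto simp: in_keys_iff lookup_minus lookup_single when_def split: if_splits)

lemma pm_card_induct:
  fixes P :: "('a \<Rightarrow>\<^sub>0 'b::ab_group_add) \<Rightarrow> bool"
  assumes "P 0"
    and "\<And>f n. n \<in> Poly_Mapping.keys f \<Longrightarrow> P (f - Poly_Mapping.single n (Poly_Mapping.lookup f n)) \<Longrightarrow> P f"
  shows "P f"
proof (induction "card (Poly_Mapping.keys f)" arbitrary: f rule: less_induct)
  case less
  show ?case
  proof (cases "f = 0")
    case True then show ?thesis using assms(1) by simp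
  next
    case False
    then obtain n where n: "n \<in> Poly_Mapping.keys f" by (metis ex_in_conv keys_eq_empty)
    have "card (Poly_Mapping.keys (f - Poly_Mapping.single n (Poly_Mapping.lookup f n))) < card (Poly_Mapping.keys f)"
      unfolding keys_remove using n by (metis card_Diff1_less finite_keys)
    then show ?thesis using less assms(2)[OF n] by blast
  qed
qed

lemma additive_diag:
  fixes D :: "('a \<Rightarrow>\<^sub>0 'b::ring) \<Rightarrow> ('a \<Rightarrow>\<^sub>0 'b)"
  assumes add: "\<And>a b. D (a + b) = D a + D b"
    and sing: "\<And>n b. D (Poly_Mapping.single n b) = Poly_Mapping.single n (c n * b)"
  shows "Poly_Mapping.lookup (D f) m = c m * Poly_Mapping.lookup f m"
proof (induction f rule: pm_card_induct)
  case 1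
  have "D 0 = D 0 + D 0" using add[of 0 0] by simp
  then show ?case by simp
next
  case (2 f n)
  let ?s = "Poly_Mapping.single n (Poly_Mapping.lookup f n)"
  have "D f = D (f - ?s) + D ?s" using add[of "f - ?s" ?s] by simp
  then show ?case using 2 by (simp add: lookup_add lookup_minus sing lookup_single when_def distrib_left right_diff_distrib)
qed

lemma lconst_mult_single: "lconst a * Poly_Mapping.single n b = Poly_Mapping.single n (a * b)"
  by (simp add: lconst_def mult_single)

lemma lvar_xi: "(lvar :: int \<Rightarrow>\<^sub>0 'b::comm_ring_1) * Poly_Mapping.single (-1) 1 = 1"
  by (simp add: lvar_def mult_single)

lemma single_sum: "Poly_Mapping.single (i + j) (a * b) = Poly_Mapping.single i a * Poly_Mapping.single j (b :: 'b::comm_ring_1)"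
  by (simp add: mult_single)

lemma lookup_const_mult:
  "Poly_Mapping.lookup (Poly_Mapping.single 0 c * f) n = c * Poly_Mapping.lookup (f :: int \<Rightarrow>\<^sub>0 'b::comm_ring_1) n"
  by (rule additive_diag[where D="\<lambda>f. Poly_Mapping.single 0 c * f"]) (simp_all add: distrib_left mult_single)

theorem lemma1p2:
  fixes \<iota> :: "'k::field_char_0 \<Rightarrow> 'b::comm_ring_1"
    and brB :: "'b \<Rightarrow> 'b \<Rightarrow> 'b"
    and \<alpha> :: "'b \<Rightarrow> 'b"
    and brA :: "(int \<Rightarrow>\<^sub>0 'b) \<Rightarrow> (int \<Rightarrow>\<^sub>0 'b) \<Rightarrow> (int \<Rightarrow>\<^sub>0 'b)"
    and \<alpha>h :: "(int \<Rightarrow>\<^sub>0 'b) \<Rightarrow> (int \<Rightarrow>\<^sub>0 'b)"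
    and s :: 'k
    and P :: "(int \<Rightarrow>\<^sub>0 'b) set"
  assumes B: "poisson_algebra \<iota> brB"
    and alpha: "poisson_derivation \<iota> brB \<alpha>"
    and A: "poisson_algebra (\<lambda>c. lconst (\<iota> c)) brA"
    and A_ext: "\<And>a b. brA (lconst a) (lconst b) = lconst (brB a b)"
    and A_x: "\<And>b. brA lvar (lconst b) = lconst (\<alpha> b) * lvar"
    and ah: "k_derivation (\<lambda>c. lconst (\<iota> c)) \<alpha>h"
    and ah_ext: "\<And>b. \<alpha>h (lconst b) = lconst (\<alpha> b)"
    and ah_x: "\<alpha>h lvar = lconst (\<iota> s) * lvar"
    and s: "s \<noteq> 0"
    and P: "poisson_prime_ideal brA P"
    and P_stable: "\<alpha>h ` P \<subseteq> P"
  shows "\<exists>Q. poisson_prime_ideal brB Q \<and> P = laurent_ext Q"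
proof -
  define sg :: "int \<Rightarrow> 'b \<Rightarrow> (int \<Rightarrow>\<^sub>0 'b)" where "sg = Poly_Mapping.single"
  define xi where "xi = sg (-1) 1"
  have lconst_sg: "lconst b = sg 0 b" for b by (simp add: lconst_def sg_def)
  have lvar_sg: "lvar = sg 1 1" by (simp add: lvar_def sg_def)
  have sgm: "sg i a * sg j b = sg (i + j) (a * b)" for i j a b by (simp add: sg_def mult_single)
  have sg1: "sg 0 1 = 1" by (simp add: sg_def)
  have sg0: "sg i 0 = 0" for i by (simp add: sg_def)
  have sgadd: "sg i (a + b) = sg i a + sg i b" for i a b by (simp add: sg_def single_add)
  have sgdiff: "sg i (a - b) = sg i a - sg i b" for i a b by (simp add: sg_def single_diff)
  have ihom: "\<iota> 1 = 1" "\<And>c d. \<iota> (c + d) = \<iota> c + \<iota> d" "\<And>c d. \<iota> (c * d) = \<iota> c * \<iota> d"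
    using B unfolding poisson_algebra_def k_alg_hom_def by auto
  have i0: "\<iota> 0 = 0" using ihom(2)[of 0 0] by simp
  have idiff: "\<iota> (c - d) = \<iota> c - \<iota> d" for c d using ihom(2)[of "c - d" d] by (simp add: algebra_simps)
  have ahadd: "\<alpha>h (a + b) = \<alpha>h a + \<alpha>h b" and ahmul: "\<alpha>h (a * b) = \<alpha>h a * b + a * \<alpha>h b" for a b
    using ah unfolding k_derivation_def k_linear_def by auto
  have bradd: "brA a (b + c) = brA a b + brA a c" and brmul: "brA a (b * c) = brA a b * c + b * brA a c"
    and brself: "brA a a = 0" for a b c
    using A unfolding poisson_algebra_def k_linear_def by auto
  have ah1: "\<alpha>h 1 = 0" using ahmul[of 1 1] by simp
  have br1: "brA a 1 = 0" for a using brmul[of a 1 1] by simp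
  have xiv: "xi * lvar = 1" "lvar * xi = 1" by (simp_all add: xi_def lvar_sg sgm sg1)
  have ahxi: "\<alpha>h xi = sg (-1) (\<iota> (- s))"
  proof -
    have "0 = \<alpha>h (lvar * xi)" using ah1 xiv by simp
    also have "\<dots> = sg 0 (\<iota> s) + lvar * \<alpha>h xi"
      unfolding ahmul ah_x by (simp add: lconst_sg mult.assoc xiv)
    finally have "xi * (sg 0 (\<iota> s) + lvar * \<alpha>h xi) = 0" by simp
    hence "\<alpha>h xi = - (xi * sg 0 (\<iota> s))"
      by (simp add: distrib_left mult.assoc[symmetric] xiv eq_neg_iff_add_eq_0 add.commute)
    also have "\<dots> = sg (-1) (\<iota> (- s))"
      using idiff[of 0 s] i0 by (simp add: xi_def sgm sg_def single_uminus mult_single)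
    finally show ?thesis .
  qed
  have brxi: "brA lvar xi = 0"
  proof -
    have "0 = brA lvar (lvar * xi)" using br1 xiv by simp
    also have "\<dots> = lvar * brA lvar xi" unfolding brmul by (simp add: brself)
    finally have "xi * (lvar * brA lvar xi) = 0" by simp
    thus ?thesis by (simp add: mult.assoc[symmetric] xiv)
  qed
  have ahpow: "\<alpha>h (sg i 1) = sg i (\<iota> (s * of_int i))" for i
  proof (induction i rule: int_induct[where k=0])
    case base then show ?case by (simp add: sg1 ah1 i0 sg0)
  next
    case (step1 i)
    have "sg (i + 1) 1 = lvar * sg i 1" by (simp add: lvar_sg sgm add.commute)
    hence "\<alpha>h (sg (i + 1) 1) = lconst (\<iota> s) * lvar * sg i 1 + lvar * sg i (\<iota> (s * of_int i))"
      by (simp add: ahmul ah_x step1)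
    also have "\<dots> = sg (i+1) (\<iota> (s * of_int (i + 1)))"
      by (simp add: lconst_sg lvar_sg sgm add.commute distrib_left ihom sgadd)
    finally show ?case .
  next
    case (step2 i)
    have "sg (i - 1) 1 = xi * sg i 1" by (simp add: xi_def sgm)
    hence "\<alpha>h (sg (i - 1) 1) = sg (-1) (\<iota> (- s)) * sg i 1 + xi * sg i (\<iota> (s * of_int i))"
      by (simp add: ahmul ahxi step2)
    also have "\<dots> = sg (i-1) (\<iota> (s * of_int (i - 1)))"
      using idiff[of 0 s] i0 idiff[of "s * of_int i" s]
      by (simp add: xi_def sgm right_diff_distrib sgadd sgdiff sg_def single_uminus mult_single single_diff)
    finally show ?case .
  qed
  have brpow: "brA lvar (sg i 1) = 0" for i
  proof (induction i rule: int_induct[where k=0])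
    case base then show ?case by (simp add: sg1 br1)
  next
    case (step1 i)
    have "sg (i + 1) 1 = lvar * sg i 1" by (simp add: lvar_sg sgm add.commute)
    thus ?case by (simp add: brmul brself step1)
  next
    case (step2 i)
    have "sg (i - 1) 1 = xi * sg i 1" by (simp add: xi_def sgm)
    thus ?case by (simp add: brmul brxi step2)
  qed
  define D where "D f = \<alpha>h f - xi * brA lvar f" for f
  have Dadd: "D (a + b) = D a + D b" for a b
    by (simp add: D_def ahadd bradd distrib_left)
  have Dsg: "D (sg n b) = sg n (\<iota> (s * of_int n) * b)" for n b
  proof -
    have e: "sg n b = lconst b * sg n 1" by (simp add: lconst_sg sgm)
    have "\<alpha>h (sg n b) = sg n (\<alpha> b) + sg n (b * \<iota> (s * of_int n))"
      unfolding e ahmul ah_ext ahpow by (simp add: lconst_sg sgm)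
    moreover have "xi * brA lvar (sg n b) = sg n (\<alpha> b)"
      unfolding e brmul brpow A_x by (simp add: lconst_sg lvar_sg xi_def sgm)
    ultimately show ?thesis by (simp add: D_def mult.commute)
  qed
  have Dlook: "Poly_Mapping.lookup (D f) m = \<iota> (s * of_int m) * Poly_Mapping.lookup f m" for f m
    by (rule additive_diag[where D=D]) (use Dadd Dsg in \<open>simp_all add: sg_def\<close>)
  have Pid: "0 \<in> P" "\<And>a b. a \<in> P \<Longrightarrow> b \<in> P \<Longrightarrow> a + b \<in> P" "\<And>r a. a \<in> P \<Longrightarrow> r * a \<in> P"
    and Pne: "P \<noteq> UNIV" and Ppr: "\<And>a b. a * b \<in> P \<Longrightarrow> a \<in> P \<or> b \<in> P"
    and Pbr: "\<And>a p. p \<in> P \<Longrightarrow> brA a p \<in> P"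
    using P unfolding poisson_prime_ideal_def prime_ideal_def is_ideal_def by auto
  have Pdiff: "a - b \<in> P" if "a \<in> P" "b \<in> P" for a b
    using Pid(2)[OF that(1) Pid(3)[OF that(2), of "-1"]] by simp
  define Q where "Q = {b. lconst b \<in> P}"
  have Q0: "0 \<in> Q" using Pid(1) by (simp add: Q_def lconst_def)
  have Qmul: "\<iota> c * b \<in> Q" if "b \<in> Q" for c b
  proof -
    have "lconst (\<iota> c * b) = lconst (\<iota> c) * lconst b" by (simp add: lconst_sg sgm)
    thus ?thesis using that Pid(3) by (simp add: Q_def)
  qed
  have DP: "D f \<in> P" if "f \<in> P" for f
    unfolding D_def using that P_stable Pbr Pid(3) Pdiff by blast
  have claim1: "\<forall>n. Poly_Mapping.lookup f n \<in> Q" if "f \<in> P" for f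
    using that
  proof (induction "card (Poly_Mapping.keys f)" arbitrary: f rule: less_induct)
    case less
    have mono: "\<forall>n. n \<noteq> m \<longrightarrow> Poly_Mapping.lookup f n \<in> Q" if True: "m \<in> Poly_Mapping.keys f" for m
    proof -
      define g where "g = D f - lconst (\<iota> (s * of_int m)) * f"
      have gP: "g \<in> P" unfolding g_def using less.prems DP Pid(3) Pdiff by blast
      have gl: "Poly_Mapping.lookup g n = \<iota> (s * (of_int n - of_int m)) * Poly_Mapping.lookup f n" for n
        by (simp add: g_def lookup_minus Dlook lconst_def lookup_const_mult idiff right_diff_distrib left_diff_distrib) 
      have "Poly_Mapping.keys g \<subseteq> Poly_Mapping.keys f - {m}"
        by (auto simp: in_keys_iff gl i0)
      hence "card (Poly_Mapping.keys g) < card (Poly_Mapping.keys f)"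
        using True by (meson card_Diff1_less finite_keys card_mono finite_Diff le_less_trans)
      hence IH: "Poly_Mapping.lookup g n \<in> Q" for n using less.hyps gP by blast
      show ?thesis
      proof (intro allI impI)
        fix n assume "n \<noteq> m"
        hence nz: "s * (of_int n - of_int m) \<noteq> 0" using s by simp
        have "\<iota> (inverse (s * (of_int n - of_int m))) * Poly_Mapping.lookup g n = Poly_Mapping.lookup f n"
        proof -
          let ?c = "s * (of_int n - of_int m)"
          have "\<iota> (inverse ?c) * (\<iota> ?c * Poly_Mapping.lookup f n) = \<iota> (inverse ?c * ?c) * Poly_Mapping.lookup f n"
            by (simp only: mult.assoc[symmetric] ihom(3))
          also have "inverse ?c * ?c = 1" using nz by (rule left_inverse)
          hence "\<iota> (inverse ?c * ?c) * Poly_Mapping.lookup f n = Poly_Mapping.lookup f n" by (simp only: ihom(1) mult_1_left)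
          ultimately show ?thesis unfolding gl by simp
        qed
        thus "Poly_Mapping.lookup f n \<in> Q" using Qmul[OF IH] by metis
      qed
    qed
    show ?case
    proof (cases "f = 0")
      case True thus ?thesis using Q0 by simp
    next
      case False
      then obtain n0 where n0: "n0 \<in> Poly_Mapping.keys f" by (metis ex_in_conv keys_eq_empty)
      show ?thesis
      proof (cases "\<exists>n1 \<in> Poly_Mapping.keys f. n1 \<noteq> n0")
        case True
        then obtain n1 where n1: "n1 \<in> Poly_Mapping.keys f" "n1 \<noteq> n0" by blast
        show ?thesis using mono[OF n0] mono[OF n1(1)] n1(2) by metis
      next
        case False
        hence z: "Poly_Mapping.lookup f k = 0" if "k \<noteq> n0" for k using that by (auto simp: in_keys_iff)
        have fe: "f = sg n0 (Poly_Mapping.lookup f n0)"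
          by (rule poly_mapping_eqI) (auto simp: sg_def lookup_single when_def z)
        have "lconst (Poly_Mapping.lookup f n0) = sg (- n0) 1 * f"
          by (subst fe) (simp add: sgm lconst_sg)
        hence "Poly_Mapping.lookup f n0 \<in> Q" using Pid(3)[OF less.prems] by (simp add: Q_def)
        thus ?thesis using z Q0 by metis
      qed
    qed
  qed
  have claim2: "(\<forall>n. Poly_Mapping.lookup f n \<in> Q) \<longrightarrow> f \<in> P" for f
  proof (induction f rule: pm_card_induct)
    case 1 then show ?case using Pid(1) by simp
  next
    case (2 f n)
    show ?case
    proof
      assume all: "\<forall>n. Poly_Mapping.lookup f n \<in> Q"
      let ?s = "Poly_Mapping.single n (Poly_Mapping.lookup f n)"
      have "\<forall>k. Poly_Mapping.lookup (f - ?s) k \<in> Q"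
        using all Q0 by (auto simp: lookup_minus lookup_single when_def)
      hence r: "f - ?s \<in> P" using 2 by blast
      have "?s = lconst (Poly_Mapping.lookup f n) * sg n 1" by (simp add: lconst_def sg_def mult_single)
      hence "?s \<in> P" using all Pid(3)[of "lconst (Poly_Mapping.lookup f n)" "sg n 1"] 
        by (simp add: Q_def mult.commute)
      from Pid(2)[OF r this] show "f \<in> P" by simp
    qed
  qed
  have PQ: "P = laurent_ext Q"
    unfolding laurent_ext_def using claim1 claim2 by blast
  have lcadd: "lconst (a + b) = lconst a + lconst b" for a b by (simp add: lconst_def single_add)
  have lcmul: "lconst (a * b) = lconst a * lconst b" for a b by (simp add: lconst_def mult_single)
  have "poisson_prime_ideal brB Q"
    unfolding poisson_prime_ideal_def prime_ideal_def is_ideal_def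
  proof (intro conjI ballI allI impI)
    show "0 \<in> Q" by (rule Q0)
    show "a + b \<in> Q" if "a \<in> Q" "b \<in> Q" for a b using that Pid(2) by (simp add: Q_def lcadd)
    show "r * a \<in> Q" if "a \<in> Q" for r a using that Pid(3) by (simp add: Q_def lcmul)
    show "Q \<noteq> UNIV"
    proof
      assume "Q = UNIV"
      hence "lconst 1 \<in> P" by (auto simp: Q_def)
      hence "(1::int \<Rightarrow>\<^sub>0 'b) \<in> P" by (simp add: lconst_def)
      hence "P = UNIV" using Pid(3)[of 1] by (metis UNIV_eq_I mult.right_neutral)
      thus False using Pne by simp
    qed
    show "a \<in> Q \<or> b \<in> Q" if "a * b \<in> Q" for a b using that Ppr by (simp add: Q_def lcmul)
    show "brB a p \<in> Q" if "p \<in> Q" for a p using that Pbr[of "lconst p" "lconst a"] by (simp add: Q_def A_ext)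
  qed
  thus ?thesis using PQ by blast
qed

end
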